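(* Let $d\ge 1$ and $1\le n\le m$ be integers, and let $P_m$ denote the set of all $m$-outcome POVMs $\mathcal{M}=\{M_b\}_{b=1}^m$ on $\mathbb{C}^d$. Let $F\subseteq P_m$ be the set of $m$-outcome POVMs that can be simulated by $n$-outcome POVMs, i.e. those $\mathcal{O}=\{O_b\}$ of the form $O_b=\sum_{a,x}p(x)\,p(b|a,x)\,Q_{a|x}$, where for each $x$ the family $\{Q_{a|x}\}_{a=1}^n$ is an $n$-outcome POVM, $p(x)$ is a probability distribution and $p(b|a,x)$ are conditional probabilities. For $\mathcal{M}\in P_m$ define the robustness $$R_F(\mathcal{M})=\min\Big\{t\ge 0 \;\Big|\; \exists\,\mathcal{N}=\{N_b\}\in P_m:\ \Big\{\tfrac{M_b+tN_b}{1+t}\Big\}_b\in F\Big\}.$$ Then $$\max_{\mathcal{M}\in P_m}\big(1+R_F(\mathcal{M})\big)\le \frac{m}{n},$$ and this inequality holds with equality when $d\ge m$.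
   Context: A POVM with $k$ outcomes on $\mathbb{C}^d$ is a family of $k$ positive semidefinite operators summing to the identity. *)

theory Defs
  imports "HOL-Analysis.Analysis"
begin

text \<open>Operators on \<open>\<complex>^d\<close> are represented as matrices \<open>complex^'d^'d\<close>;
  the dimension is \<open>d = CARD('d)\<close>.\<close>

definition hermitian_op :: "complex^'d^'d \<Rightarrow> bool" where
  "hermitian_op A \<longleftrightarrow> (\<forall>i j. A $ i $ j = cnj (A $ j $ i))"

definition quad_form :: "complex^'d^'d \<Rightarrow> complex^'d \<Rightarrow> complex" where
  "quad_form A v = (\<Sum>i\<in>UNIV. cnj (v $ i) * (A *v v) $ i)"

definition psd :: "complex^'d^'d \<Rightarrow> bool" where
  "psd A \<longleftrightarrow> hermitian_op A \<and>
     (\<forall>v. Im (quad_form A v) = 0 \<and> 0 \<le> Re (quad_form A v))"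

text \<open>A POVM with \<open>k\<close> outcomes, indexed by \<open>0..<k\<close>.\<close>
definition povm :: "nat \<Rightarrow> (nat \<Rightarrow> complex^'d^'d) \<Rightarrow> bool" where
  "povm k M \<longleftrightarrow> (\<forall>b<k. psd (M b)) \<and> (\<Sum>b<k. M b) = mat 1"

text \<open>The set \<open>F\<close>: \<open>m\<close>-outcome POVMs simulable by \<open>n\<close>-outcome POVMs,
  \<open>O_b = \<Sum>_{a,x} p(x) p(b|a,x) Q_{a|x}\<close>, with \<open>x\<close> ranging over a finite set \<open>{0..<K}\<close>.\<close>
definition simulable :: "nat \<Rightarrow> nat \<Rightarrow> (nat \<Rightarrow> complex^'d^'d) \<Rightarrow> bool" where
  "simulable n m Ob \<longleftrightarrow> povm m Ob \<and>
     (\<exists>(K::nat) (p::nat \<Rightarrow> real) (q::nat \<Rightarrow> nat \<Rightarrow> nat \<Rightarrow> real) (Q::nat \<Rightarrow> nat \<Rightarrow> complex^'d^'d).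
        (\<forall>x<K. 0 \<le> p x) \<and> (\<Sum>x<K. p x) = 1 \<and>
        (\<forall>x<K. povm n (Q x)) \<and>
        (\<forall>x<K. \<forall>a<n. (\<forall>b<m. 0 \<le> q b a x) \<and> (\<Sum>b<m. q b a x) = 1) \<and>
        (\<forall>b<m. Ob b = (\<Sum>x<K. \<Sum>a<n. (p x * q b a x) *\<^sub>R Q x a)))"

text \<open>Robustness \<open>R_F(M) = min {t \<ge> 0 | \<exists>N \<in> P_m. {(M_b + t N_b)/(1+t)} \<in> F}\<close>
  (rendered as an infimum).\<close>
definition robustness :: "nat \<Rightarrow> nat \<Rightarrow> (nat \<Rightarrow> complex^'d^'d) \<Rightarrow> real" where
  "robustness n m M = Inf {t. 0 \<le> t \<and> (\<exists>N. povm m N \<and>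
       simulable n m (\<lambda>b. (1 / (1 + t)) *\<^sub>R (M b + t *\<^sub>R N b)))}"

end

theory Submission
  imports Defs
begin


lemma quad_form_expand: "quad_form A v = (\<Sum>i\<in>UNIV. cnj (v $ i) * (\<Sum>j\<in>UNIV. A $ i $ j * v $ j))"
  by (simp add: quad_form_def matrix_vector_mult_def)

lemma mult_if01: "(a::complex) * (if P then 1 else 0) = (if P then a else 0)"
  "(if P then c else 0) * (a::complex) = (if P then c * a else 0)"
  "cnj (if P then 1 else 0) = (if P then 1 else 0)"
  by auto

lemma quad_form_axis: "quad_form A (axis i 1) = A $ i $ i"
  by (simp add: quad_form_expand axis_def mult_if01)

definition dmat :: "('d \<Rightarrow> real) \<Rightarrow> complex^'d^'d" where
  "dmat f = (\<chi> i j. if i = j then complex_of_real (f i) else 0)"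

lemma quad_form_dmat: "quad_form (dmat f) v = of_real (\<Sum>i\<in>UNIV. f i * (norm (v $ i))\<^sup>2)"
proof -
  have "quad_form (dmat f) v = (\<Sum>i\<in>UNIV. of_real (f i) * (v $ i * cnj (v $ i)))"
    unfolding quad_form_expand dmat_def by (simp add: mult_if01 cong: if_cong) (simp add: mult_ac)
  also have "\<dots> = (\<Sum>i\<in>UNIV. of_real (f i * (norm (v $ i))\<^sup>2))"
    by (simp add: complex_norm_square[symmetric])
  finally show ?thesis by simp
qed

lemma psd_dmat: "(\<And>i. 0 \<le> f i) \<Longrightarrow> psd (dmat f)"
  unfolding psd_def hermitian_op_def quad_form_dmat
  apply (intro conjI allI)
   apply (simp add: dmat_def)
  apply (simp only: Re_complex_of_real Im_complex_of_real)
  by (simp add: sum_nonneg)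

lemma dmat_one: "dmat (\<lambda>_. 1) = mat 1"
  unfolding dmat_def mat_def by (simp add: vec_eq_iff)


lemma sum_dmat: "(\<Sum>b\<in>S. dmat (f b)) = dmat (\<lambda>i. \<Sum>b\<in>S. f b i)"
proof (induction S rule: infinite_finite_induct)
  case (infinite A) then show ?case by (simp add: dmat_def vec_eq_iff)
next
  case empty then show ?case by (simp add: dmat_def vec_eq_iff)
next
  case (insert x F) then show ?case by (simp add: dmat_def vec_eq_iff)
qed

lemma shift_bij:
  assumes "0 < (m::nat)"
  shows "bij_betw (\<lambda>x. (x + a) mod m) {..<m} {..<m}"
proof -
  have inj: "inj_on (\<lambda>x. (x + a) mod m) {..<m}"
  proof (rule inj_onI)
    fix x y assume "x \<in> {..<m}" "y \<in> {..<m}" "(x + a) mod m = (y + a) mod m"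
    then have "(int x + int a) mod int m = (int y + int a) mod int m"
      by (metis of_nat_add of_nat_mod)
    then have "(int x + int a - int a) mod int m = (int y + int a - int a) mod int m"
      by (rule mod_diff_cong) simp
    then have "int x mod int m = int y mod int m" by simp
    then show "x = y" using \<open>x \<in> {..<m}\<close> \<open>y \<in> {..<m}\<close>
      by (metis lessThan_iff mod_less of_nat_eq_iff of_nat_mod)
  qed
  have "(\<lambda>x. (x + a) mod m) ` {..<m} \<subseteq> {..<m}" using assms by auto
  with inj have "(\<lambda>x. (x + a) mod m) ` {..<m} = {..<m}"
    by (simp add: endo_inj_surj)
  with inj show ?thesis by (simp add: bij_betw_def)
qed

lemma shift_sum:
  assumes "0 < (m::nat)"
  shows "(\<Sum>x<m. f ((x + a) mod m)) = (\<Sum>x<m. f x)"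
  using sum.reindex_bij_betw[OF shift_bij[OF assms, of a], of f] by simp

lemma psd_zero: "psd 0"
  by (simp add: psd_def hermitian_op_def quad_form_expand)

lemma quad_form_add: "quad_form (A + B) v = quad_form A v + quad_form B v"
  by (simp add: quad_form_expand distrib_left distrib_right sum.distrib)

lemma quad_form_scaleR: "quad_form (c *\<^sub>R A) v = of_real c * quad_form A v"
  unfolding quad_form_expand vector_scaleR_component
  by (simp add: scaleR_conv_of_real sum_distrib_left mult_ac)

lemma psd_add:
  assumes "psd A" "psd B" shows "psd (A + B)"
  unfolding psd_def hermitian_op_def
proof (intro conjI allI)
  fix i j
  have "A$i$j = cnj (A$j$i)" "B$i$j = cnj (B$j$i)"
    using assms unfolding psd_def hermitian_op_def by blast+
  then show "(A + B) $ i $ j = cnj ((A + B) $ j $ i)" by simp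
next
  fix v
  have "Im (quad_form A v) = 0 \<and> 0 \<le> Re (quad_form A v)"
       "Im (quad_form B v) = 0 \<and> 0 \<le> Re (quad_form B v)"
    using assms unfolding psd_def by blast+
  then show "Im (quad_form (A + B) v) = 0" "0 \<le> Re (quad_form (A + B) v)"
    by (simp_all add: quad_form_add)
qed

lemma psd_scaleR:
  assumes "psd A" "0 \<le> c" shows "psd (c *\<^sub>R A)"
  unfolding psd_def hermitian_op_def
proof (intro conjI allI)
  fix i j
  have "A$i$j = cnj (A$j$i)"
    using assms unfolding psd_def hermitian_op_def by blast
  then show "(c *\<^sub>R A) $ i $ j = cnj ((c *\<^sub>R A) $ j $ i)" by simp
next
  fix v
  have "Im (quad_form A v) = 0 \<and> 0 \<le> Re (quad_form A v)"
    using assms unfolding psd_def by blast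
  then show "Im (quad_form (c *\<^sub>R A) v) = 0" "0 \<le> Re (quad_form (c *\<^sub>R A) v)"
    using assms(2) by (simp_all add: quad_form_scaleR)
qed

lemma psd_if: "psd A \<Longrightarrow> psd (if P then A else 0)"
  by (simp add: psd_zero)

lemma psd_diag: "psd A \<Longrightarrow> 0 \<le> Re (A $ i $ i)"
  using quad_form_axis[of A i] unfolding psd_def by metis
lemma psd_sum: "(\<And>x. x \<in> S \<Longrightarrow> psd (f x)) \<Longrightarrow> psd (\<Sum>x\<in>S. f x)"
proof (induction S rule: infinite_finite_induct)
  case (infinite A) then show ?case by (simp add: psd_zero)
next
  case empty then show ?case by (simp add: psd_zero)
next
  case (insert x F) then show ?case by (simp add: psd_add)
qed

lemma simulable_intro:
  fixes Q :: "nat \<Rightarrow> nat \<Rightarrow> complex^'d^'d"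
  assumes p0: "\<forall>x<K. 0 \<le> p x" and p1: "(\<Sum>x<K. p x) = 1"
    and Qp: "\<forall>x<K. povm n (Q x)"
    and qp: "\<forall>x<K. \<forall>a<n. (\<forall>b<m. 0 \<le> q b a x) \<and> (\<Sum>b<m. q b a x) = 1"
    and Oe: "\<forall>b<m. Ob b = (\<Sum>x<K. \<Sum>a<n. (p x * q b a x) *\<^sub>R Q x a)"
  shows "simulable n m Ob"
proof -
  have psdO: "\<forall>b<m. psd (Ob b)"
  proof (intro allI impI)
    fix b assume "b < m"
    have "psd (\<Sum>x<K. \<Sum>a<n. (p x * q b a x) *\<^sub>R Q x a)"
    proof (intro psd_sum psd_scaleR)
      fix x a assume "x \<in> {..<K}" "a \<in> {..<n}"
      then show "psd (Q x a)" using Qp unfolding povm_def by auto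
      show "0 \<le> p x * q b a x" using p0 qp \<open>b < m\<close> \<open>x \<in> {..<K}\<close> \<open>a \<in> {..<n}\<close>
        by simp
    qed
    then show "psd (Ob b)" using Oe \<open>b < m\<close> by simp
  qed
  have "(\<Sum>b<m. Ob b) = (\<Sum>b<m. \<Sum>x<K. \<Sum>a<n. (p x * q b a x) *\<^sub>R Q x a)"
    using Oe by simp
  also have "\<dots> = (\<Sum>x<K. \<Sum>b<m. \<Sum>a<n. (p x * q b a x) *\<^sub>R Q x a)"
    by (rule sum.swap[where A="{..<m}" and B="{..<K}"])
  also have "\<dots> = (\<Sum>x<K. \<Sum>a<n. \<Sum>b<m. (p x * q b a x) *\<^sub>R Q x a)"
    by (rule sum.cong[OF refl], rule sum.swap[where A="{..<m}" and B="{..<n}"])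
  also have "\<dots> = (\<Sum>x<K. \<Sum>a<n. (p x * (\<Sum>b<m. q b a x)) *\<^sub>R Q x a)"
    by (simp add: scaleR_sum_left sum_distrib_left)
  also have "\<dots> = (\<Sum>x<K. p x *\<^sub>R (\<Sum>a<n. Q x a))"
  proof (rule sum.cong[OF refl])
    fix x assume x: "x \<in> {..<K}"
    have "(\<Sum>a<n. (p x * (\<Sum>b<m. q b a x)) *\<^sub>R Q x a) = (\<Sum>a<n. p x *\<^sub>R Q x a)"
      using qp x by (intro sum.cong) auto
    then show "(\<Sum>a<n. (p x * (\<Sum>b<m. q b a x)) *\<^sub>R Q x a) = p x *\<^sub>R (\<Sum>a<n. Q x a)"
      by (simp add: scaleR_sum_right)
  qed
  also have "\<dots> = (\<Sum>x<K. p x *\<^sub>R mat 1)"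
    using Qp by (intro sum.cong) (auto simp: povm_def)
  also have "\<dots> = (\<Sum>x<K. p x) *\<^sub>R mat 1" by (rule scaleR_sum_left[symmetric])
  also have "\<dots> = mat 1" using p1 by simp
  finally have "povm m Ob" unfolding povm_def using psdO by blast
  then show ?thesis
    unfolding simulable_def
    apply (intro conjI)
     apply assumption
    apply (rule exI[of _ K], rule exI[of _ p], rule exI[of _ q], rule exI[of _ Q])
    using p0 p1 Qp qp Oe by blast
qed


lemma feasible:
  fixes M :: "nat \<Rightarrow> complex^'d^'d"
  assumes n1: "1 \<le> n" and nm: "n \<le> m" and PM: "povm m M"
  defines "t \<equiv> (real m - real n) / real n"
  shows "\<exists>N. povm m N \<and> simulable n m (\<lambda>b. (1 / (1 + t)) *\<^sub>R (M b + t *\<^sub>R N b))"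
proof -
  have m0: "0 < m" using n1 nm by simp
  have Mpsd: "\<And>b. b < m \<Longrightarrow> psd (M b)" using PM unfolding povm_def by blast
  have Msum: "(\<Sum>b<m. M b) = mat 1" using PM unfolding povm_def by blast
  define sh where "sh x j = (x + j) mod m" for x j
  have sh_lt: "sh x j < m" for x j using m0 by (simp add: sh_def)
  have shsum: "(\<Sum>x<m. f (sh x j)) = (\<Sum>x<m. f x)" for f :: "nat \<Rightarrow> 'z::comm_monoid_add" and j
    unfolding sh_def by (rule shift_sum[OF m0])
  have shsum': "(\<Sum>j<m. f (sh x j)) = (\<Sum>j<m. f j)" for f :: "nat \<Rightarrow> 'z::comm_monoid_add" and x
    unfolding sh_def using shift_sum[OF m0, of f x] by (simp add: add.commute)
  define R where "R x = (\<Sum>j\<in>{n..<m}. M (sh x j))" for x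
  define Q where "Q x a = M (sh x a) + (if a = n - 1 then R x else 0)" for x a
  define q where "q b a x = (if sh x a = b then 1 else 0::real)" for b a x
  define p where "p x = 1 / real m" for x :: nat
  define S where "S b = (\<Sum>x<m. if sh x (n - 1) = b then R x else 0)" for b
  have Rpsd: "psd (R x)" for x
    unfolding R_def by (intro psd_sum Mpsd sh_lt)
  have Spsd: "psd (S b)" for b
    unfolding S_def by (intro psd_sum psd_if Rpsd)
  have shM: "(\<Sum>j<m. M (sh x j)) = mat 1" for x
    using shsum'[of M x] Msum by simp
  have split: "(\<Sum>a<n. M (sh x a)) + R x = mat 1" for x
  proof -
    have "(\<Sum>a<n. M (sh x a)) + R x = (\<Sum>j\<in>{0..<n}. M (sh x j)) + (\<Sum>j\<in>{n..<m}. M (sh x j))"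
      unfolding R_def by (simp add: atLeast0LessThan)
    also have "\<dots> = (\<Sum>j\<in>{0..<m}. M (sh x j))"
      using nm by (rule sum.atLeastLessThan_concat[OF le0])
    also have "\<dots> = mat 1" using shM by (simp add: atLeast0LessThan)
    finally show ?thesis .
  qed
  have Qpovm: "povm n (Q x)" for x
  proof -
    have "\<forall>a<n. psd (Q x a)"
      unfolding Q_def by (intro allI impI psd_add Mpsd sh_lt psd_if Rpsd)
    moreover have "(\<Sum>a<n. Q x a) = mat 1"
    proof -
      have "(\<Sum>a<n. Q x a) = (\<Sum>a<n. M (sh x a)) + (\<Sum>a<n. if a = n - 1 then R x else 0)"
        unfolding Q_def by (rule sum.distrib)
      also have "(\<Sum>a<n. if a = n - 1 then R x else 0) = R x"
        using n1 by simp
      finally show ?thesis using split by simp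
    qed
    ultimately show ?thesis unfolding povm_def by blast
  qed
  have qsum: "(\<Sum>b<m. q b a x) = 1" for a x
    unfolding q_def using sh_lt[of x a] by simp
  have psum: "(\<Sum>x<m. p x) = 1" unfolding p_def using m0 by simp
  have onehot: "(\<Sum>x<m. if sh x a = b then Y else 0) = Y" if "b < m" for a b and Y :: "complex^'d^'d"
    using shsum[of "\<lambda>y. if y = b then Y else 0" a] that by simp
  have formula: "(\<Sum>x<m. \<Sum>a<n. (p x * q b a x) *\<^sub>R Q x a) = (1 / real m) *\<^sub>R (real n *\<^sub>R M b + S b)"
    if b: "b < m" for b
  proof -
    have "(\<Sum>x<m. \<Sum>a<n. (p x * q b a x) *\<^sub>R Q x a) = (1 / real m) *\<^sub>R (\<Sum>x<m. \<Sum>a<n. q b a x *\<^sub>R Q x a)"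
      unfolding p_def by (simp add: scaleR_sum_right)
    also have "(\<Sum>x<m. \<Sum>a<n. q b a x *\<^sub>R Q x a)
        = (\<Sum>x<m. \<Sum>a<n. (if sh x a = b then M b else 0)) + (\<Sum>x<m. \<Sum>a<n. if a = n - 1 then q b a x *\<^sub>R R x else 0)"
    proof -
      have pt: "q b a x *\<^sub>R Q x a = (if sh x a = b then M b else 0) + (if a = n - 1 then q b a x *\<^sub>R R x else 0)" for a x
        unfolding Q_def q_def by (auto simp: scaleR_add_right)
      show ?thesis by (simp only: pt sum.distrib)
    qed
    also have "(\<Sum>x<m. \<Sum>a<n. (if sh x a = b then M b else 0)) = (\<Sum>a<n. \<Sum>x<m. (if sh x a = b then M b else 0))"
      by (rule sum.swap[where A="{..<m}" and B="{..<n}"])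
    also have "\<dots> = (\<Sum>a<n. M b)"
      using onehot[OF b] by simp
    also have "\<dots> = real n *\<^sub>R M b"
      by (simp only: sum_constant_scaleR card_lessThan)
    also have "(\<Sum>x<m. \<Sum>a<n. if a = n - 1 then q b a x *\<^sub>R R x else 0) = (\<Sum>x<m. q b (n - 1) x *\<^sub>R R x)"
      using n1 by simp
    also have "\<dots> = S b"
      unfolding S_def q_def by (intro sum.cong) auto
    finally show ?thesis .
  qed
  show ?thesis
  proof (cases "m = n")
    case True
    then have t0: "t = 0" unfolding t_def by simp
    have R0: "R x = 0" for x unfolding R_def using True by simp
    have S0: "S b = 0" for b unfolding S_def R0 by simp
    have "simulable n m (\<lambda>b. (1 / (1 + t)) *\<^sub>R (M b + t *\<^sub>R M b))"
    proof (rule simulable_intro[where K = m and p = p and q = q and Q = Q])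
      show "\<forall>x<m. 0 \<le> p x" unfolding p_def by simp
      show "(\<Sum>x<m. p x) = 1" by (rule psum)
      show "\<forall>x<m. povm n (Q x)" using Qpovm by blast
      show "\<forall>x<m. \<forall>a<n. (\<forall>b<m. 0 \<le> q b a x) \<and> (\<Sum>b<m. q b a x) = 1"
        using qsum unfolding q_def by simp
      show "\<forall>b<m. (1 / (1 + t)) *\<^sub>R (M b + t *\<^sub>R M b) = (\<Sum>x<m. \<Sum>a<n. (p x * q b a x) *\<^sub>R Q x a)"
        using formula S0 True m0 t0 by simp
    qed
    then show ?thesis using PM by blast
  next
    case False
    then have mn: "n < m" using nm by simp
    define N where "N b = (1 / (real m - real n)) *\<^sub>R S b" for b
    have "povm m N"
    proof -
      have "\<forall>b<m. psd (N b)"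
        unfolding N_def using mn by (intro allI impI psd_scaleR Spsd) simp
      moreover have "(\<Sum>b<m. N b) = mat 1"
      proof -
        have "(\<Sum>b<m. S b) = (\<Sum>x<m. \<Sum>b<m. if sh x (n - 1) = b then R x else 0)"
          unfolding S_def by (rule sum.swap)
        also have "\<dots> = (\<Sum>x<m. R x)"
          using sh_lt by simp
        also have "\<dots> = (\<Sum>j\<in>{n..<m}. \<Sum>x<m. M (sh x j))"
          unfolding R_def by (rule sum.swap)
        also have "\<dots> = (\<Sum>j\<in>{n..<m}. mat 1)"
          using shsum[of M] Msum by simp
        also have "\<dots> = (real m - real n) *\<^sub>R mat 1"
          using mn by (simp only: sum_constant_scaleR card_atLeastLessThan of_nat_diff[OF nm])
        finally have "(\<Sum>b<m. S b) = (real m - real n) *\<^sub>R mat 1" .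
        then show ?thesis
          unfolding N_def using mn by (simp add: scaleR_sum_right[symmetric])
      qed
      ultimately show ?thesis unfolding povm_def by blast
    qed
    moreover have "simulable n m (\<lambda>b. (1 / (1 + t)) *\<^sub>R (M b + t *\<^sub>R N b))"
    proof (rule simulable_intro[where K = m and p = p and q = q and Q = Q])
      show "\<forall>x<m. 0 \<le> p x" unfolding p_def by simp
      show "(\<Sum>x<m. p x) = 1" by (rule psum)
      show "\<forall>x<m. povm n (Q x)" using Qpovm by blast
      show "\<forall>x<m. \<forall>a<n. (\<forall>b<m. 0 \<le> q b a x) \<and> (\<Sum>b<m. q b a x) = 1"
        using qsum unfolding q_def by simp
      show "\<forall>b<m. (1 / (1 + t)) *\<^sub>R (M b + t *\<^sub>R N b) = (\<Sum>x<m. \<Sum>a<n. (p x * q b a x) *\<^sub>R Q x a)"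
      proof (intro allI impI)
        fix b assume b: "b < m"
        have c1: "1 / (1 + t) = real n / real m" unfolding t_def using n1 mn by (simp add: field_simps)
        have c2: "real n / real m * (t * (1 / (real m - real n))) = 1 / real m"
          unfolding t_def using n1 mn by (simp add: field_simps)
        have c3: "1 / real m * real n = real n / real m" by simp
        show "(1 / (1 + t)) *\<^sub>R (M b + t *\<^sub>R N b) = (\<Sum>x<m. \<Sum>a<n. (p x * q b a x) *\<^sub>R Q x a)"
          unfolding formula[OF b] N_def c1
          by (simp only: scaleR_add_right scaleR_scaleR c2 c3)
      qed
    qed
    ultimately show ?thesis by blast
  qed
qed



lemma lower:
  fixes M N :: "nat \<Rightarrow> complex^'d^'d" and e :: "nat \<Rightarrow> 'd"
  assumes n1: "1 \<le> n" and nm: "n \<le> m"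
    and diag: "\<forall>b<m. 1 \<le> Re (M b $ e b $ e b)"
    and t0: "0 \<le> t" and PN: "povm m N"
    and sim: "simulable n m (\<lambda>b. (1 / (1 + t)) *\<^sub>R (M b + t *\<^sub>R N b))"
  shows "real m / real n - 1 \<le> t"
proof -
  define Ob where "Ob b = (1 / (1 + t)) *\<^sub>R (M b + t *\<^sub>R N b)" for b
  obtain K p q and Q :: "nat \<Rightarrow> nat \<Rightarrow> complex^'d^'d" where
    p0: "\<forall>x<K. 0 \<le> p x" and p1: "(\<Sum>x<K. p x) = 1"
    and Qp: "\<forall>x<K. povm n (Q x)"
    and qp: "\<forall>x<K. \<forall>a<n. (\<forall>b<m. 0 \<le> q b a x) \<and> (\<Sum>b<m. q b a x) = 1"
    and Oe0: "\<forall>b<m. (1 / (1 + t)) *\<^sub>R (M b + t *\<^sub>R N b) = (\<Sum>x<K. \<Sum>a<n. (p x * q b a x) *\<^sub>R Q x a)"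
    using sim[unfolded simulable_def, THEN conjunct2] by blast
  have Oe: "\<forall>b<m. Ob b = (\<Sum>x<K. \<Sum>a<n. (p x * q b a x) *\<^sub>R Q x a)"
    using Oe0 unfolding Ob_def by blast
  define D where "D x a b = Re (Q x a $ e b $ e b)" for x a b
  have D0: "0 \<le> D x a b" if "x < K" "a < n" for x a b
    unfolding D_def using Qp that by (auto simp: povm_def intro!: psd_diag)
  have D1: "D x a b \<le> 1" if x: "x < K" and a: "a < n" for x a b
  proof -
    have "(\<Sum>a<n. Q x a) = mat 1" using Qp x by (simp add: povm_def)
    then have "(\<Sum>a<n. Q x a) $ e b $ e b = 1" by (simp add: mat_def)
    then have "(\<Sum>a<n. D x a b) = 1" unfolding D_def
      by (metis Re_sum one_complex.sel(1) sum_component)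
    moreover have "D x a b \<le> (\<Sum>a<n. D x a b)"
      using a D0[OF x] by (intro member_le_sum) auto
    ultimately show ?thesis by simp
  qed
  define phi where "phi = (\<Sum>b<m. Re (Ob b $ e b $ e b))"
  have "phi = (\<Sum>b<m. \<Sum>x<K. \<Sum>a<n. p x * q b a x * D x a b)"
    unfolding phi_def D_def using Oe by (intro sum.cong) auto
  also have "\<dots> \<le> (\<Sum>b<m. \<Sum>x<K. \<Sum>a<n. p x * q b a x)"
  proof (intro sum_mono)
    fix b x a assume "b \<in> {..<m}" "x \<in> {..<K}" "a \<in> {..<n}"
    then have "0 \<le> p x * q b a x" "D x a b \<le> 1" using p0 qp D1 by auto
    then show "p x * q b a x * D x a b \<le> p x * q b a x"
      using mult_left_mono[of "D x a b" 1 "p x * q b a x"] by simp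
  qed
  also have "\<dots> = (\<Sum>x<K. \<Sum>a<n. \<Sum>b<m. p x * q b a x)"
    by (subst sum.swap[where A="{..<m}" and B="{..<K}"])
       (rule sum.cong[OF refl], rule sum.swap[where A="{..<m}" and B="{..<n}"])
  also have "\<dots> = (\<Sum>x<K. \<Sum>a<n. p x)"
  proof (intro sum.cong refl)
    fix x a assume "x \<in> {..<K}" "a \<in> {..<n}"
    then show "(\<Sum>b<m. p x * q b a x) = p x" using qp by (simp add: sum_distrib_left[symmetric])
  qed
  also have "\<dots> = real n" using p1 by (simp add: sum_distrib_left[symmetric])
  finally have up: "phi \<le> real n" .
  have "phi = (\<Sum>b<m. (1 / (1 + t)) * (Re (M b $ e b $ e b) + t * Re (N b $ e b $ e b)))"
    unfolding phi_def Ob_def by simp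
  also have "\<dots> \<ge> (\<Sum>b<m. (1 / (1 + t)) * 1)"
  proof (intro sum_mono)
    fix b assume b: "b \<in> {..<m}"
    have "0 \<le> Re (N b $ e b $ e b)" using PN b by (auto simp: povm_def intro!: psd_diag)
    then have "1 \<le> Re (M b $ e b $ e b) + t * Re (N b $ e b $ e b)"
      using diag b t0 by (simp add: add_increasing2)
    then show "(1 / (1 + t)) * 1 \<le> (1 / (1 + t)) * (Re (M b $ e b $ e b) + t * Re (N b $ e b $ e b))"
      using t0 by (intro mult_left_mono) auto
  qed
  finally have "real m / (1 + t) \<le> real n" using up by simp
  then have "real m \<le> real n * (1 + t)" using t0 by (simp add: divide_le_eq mult.commute)
  then show ?thesis using n1 by (simp add: field_simps)
qed



lemma witness:
  assumes m1: "1 \<le> m" and dm: "m \<le> CARD('d)"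
  shows "\<exists>(M :: nat \<Rightarrow> complex^'d^'d) (e :: nat \<Rightarrow> 'd). povm m M \<and> (\<forall>b<m. 1 \<le> Re (M b $ e b $ e b))"
proof -
  obtain h :: "nat \<Rightarrow> 'd" where h: "bij_betw h {0..<card (UNIV :: 'd set)} UNIV"
    using ex_bij_betw_nat_finite[of "UNIV :: 'd set"] by auto
  have sub: "{..<m} \<subseteq> {0..<CARD('d)}" using dm by (auto simp: subset_iff)
  have inj: "inj_on h {..<m}"
    by (rule inj_on_subset[OF bij_betw_imp_inj_on[OF h] sub])
  define k where "k = m - 1"
  have mk: "m = Suc k" using m1 unfolding k_def by simp
  define f where "f b i = (if b = k then (if i \<in> h ` {..<k} then 0 else 1) else (if i = h b then 1 else 0 :: real))" for b i
  define M where "M b = dmat (f b)" for b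
  have "(\<Sum>b<m. f b i) = 1" for i
  proof -
    have "(\<Sum>b<m. f b i) = (\<Sum>b<k. f b i) + f k i" unfolding mk by simp
    also have "(\<Sum>b<k. f b i) = (\<Sum>b<k. if i = h b then 1 else 0)"
      unfolding f_def by (intro sum.cong) auto
    also have "\<dots> = (if i \<in> h ` {..<k} then 1 else 0)"
    proof (cases "i \<in> h ` {..<k}")
      case True
      then obtain b0 where b0: "b0 < k" "i = h b0" by auto
      have "(\<Sum>b<k. if i = h b then 1 else 0) = (\<Sum>b<k. if b = b0 then 1 else (0::real))"
      proof (intro sum.cong refl)
        fix b assume "b \<in> {..<k}"
        then have "h b0 = h b \<longleftrightarrow> b0 = b"
          using inj b0 mk by (auto dest: inj_onD)
        then show "(if i = h b then 1 else 0) = (if b = b0 then 1 else (0::real))"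
          using b0 by auto
      qed
      then show ?thesis using True b0 by simp
    next
      case False
      then show ?thesis by (auto intro!: sum.neutral)
    qed
    finally show ?thesis unfolding f_def by simp
  qed
  then have "(\<Sum>b<m. M b) = mat 1"
    unfolding M_def sum_dmat by (simp add: dmat_one)
  moreover have "\<forall>b<m. psd (M b)"
    unfolding M_def f_def by (auto intro!: psd_dmat)
  moreover have "\<forall>b<m. 1 \<le> Re (M b $ h b $ h b)"
  proof (intro allI impI)
    fix b assume b: "b < m"
    have "f b (h b) = 1"
    proof (cases "b = k")
      case True
      have "h k \<notin> h ` {..<k}"
        using inj mk by (auto dest: inj_onD)
      then show ?thesis using True unfolding f_def by simp
    next
      case False then show ?thesis unfolding f_def by simp
    qed
    then show "1 \<le> Re (M b $ h b $ h b)" unfolding M_def dmat_def by simp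
  qed
  ultimately show ?thesis unfolding povm_def by blast
qed

theorem proposition1:
  fixes n m :: nat
  assumes "1 \<le> n" and "n \<le> m"
  shows "(\<forall>M :: nat \<Rightarrow> complex^'d^'d. povm m M \<longrightarrow>
            1 + robustness n m M \<le> real m / real n)
       \<and> (CARD('d) \<ge> m \<longrightarrow>
            (\<exists>M :: nat \<Rightarrow> complex^'d^'d. povm m M \<and> 1 + robustness n m M = real m / real n))"
proof -
  define t where "t = (real m - real n) / real n"
  have t0: "0 \<le> t" unfolding t_def using assms by simp
  have t1: "1 + t = real m / real n" unfolding t_def using assms by (simp add: field_simps)
  have mem: "t \<in> {t. 0 \<le> t \<and> (\<exists>N. povm m N \<and>
       simulable n m (\<lambda>b. (1 / (1 + t)) *\<^sub>R (M b + t *\<^sub>R N b)))}"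
    if "povm m M" for M :: "nat \<Rightarrow> complex^'d^'d"
    using feasible[OF assms that] t0 unfolding t_def by simp
  have bdd: "bdd_below {t. 0 \<le> t \<and> (\<exists>N. povm m N \<and>
       simulable n m (\<lambda>b. (1 / (1 + t)) *\<^sub>R (M b + t *\<^sub>R N b)))}" for M :: "nat \<Rightarrow> complex^'d^'d"
    by (rule bdd_belowI[of _ 0]) simp
  have up: "1 + robustness n m M \<le> real m / real n" if "povm m M" for M :: "nat \<Rightarrow> complex^'d^'d"
  proof -
    have "robustness n m M \<le> t"
      unfolding robustness_def by (rule cInf_lower[OF mem[OF that] bdd])
    then show ?thesis using t1 by simp
  qed
  show ?thesis
  proof (intro conjI allI impI)
    fix M :: "nat \<Rightarrow> complex^'d^'d" assume "povm m M"
    then show "1 + robustness n m M \<le> real m / real n" by (rule up)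
  next
    assume dm: "m \<le> CARD('d)"
    obtain M :: "nat \<Rightarrow> complex^'d^'d" and e :: "nat \<Rightarrow> 'd"
      where PM: "povm m M" and dg: "\<forall>b<m. 1 \<le> Re (M b $ e b $ e b)"
      using witness[OF _ dm] assms by auto
    have "real m / real n - 1 \<le> robustness n m M"
      unfolding robustness_def
    proof (rule cInf_greatest)
      show "{t. 0 \<le> t \<and> (\<exists>N. povm m N \<and>
          simulable n m (\<lambda>b. (1 / (1 + t)) *\<^sub>R (M b + t *\<^sub>R N b)))} \<noteq> {}"
        using mem[OF PM] by blast
    next
      fix s assume "s \<in> {t. 0 \<le> t \<and> (\<exists>N. povm m N \<and>
          simulable n m (\<lambda>b. (1 / (1 + t)) *\<^sub>R (M b + t *\<^sub>R N b)))}"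
      then obtain N where "0 \<le> s" "povm m N"
        "simulable n m (\<lambda>b. (1 / (1 + s)) *\<^sub>R (M b + s *\<^sub>R N b))" by blast
      then show "real m / real n - 1 \<le> s"
        using lower[OF assms dg] by blast
    qed
    then have "real m / real n \<le> 1 + robustness n m M" by simp
    with up[OF PM] have "1 + robustness n m M = real m / real n" by simp
    with PM show "\<exists>M :: nat \<Rightarrow> complex^'d^'d. povm m M \<and> 1 + robustness n m M = real m / real n"
      by blast
  qed
qed

end
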